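(* Let $m\geq 2$ and let $\lambda:\mathbb{R}^{2m}\to\mathbb{R}$ be a function satisfying $\lambda(\alpha\zeta)=\alpha\lambda(\zeta)$ for all $\alpha\in\mathbb{R}$, $\zeta\in\mathbb{R}^{2m}$, and $\lambda(\zeta_1+\zeta_2)=\lambda(\zeta_1)+\lambda(\zeta_2)$ for all $\zeta_1,\zeta_2\in\mathbb{R}^{2m}$ with $[\zeta_1,\zeta_2]=0$. Then $\lambda$ is a linear functional.
   Context: For $u,v\in\mathbb{R}^{2m}$, $[u,v]:=u^T\omega v$ where $\omega=\begin{pmatrix}0&-\mathbb{1}_m\\ \mathbb{1}_m&0\end{pmatrix}$ is the standard symplectic form. *)

theory Defs
  imports "HOL-Analysis.Analysis"
begin

text \<open>R^{2m} is modelled as real ^ ('m + 'm): the indices Inl i (i in 'm) are the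
first m coordinates, Inr i the last m coordinates; m = CARD('m).\<close>

definition symp_omega :: "real ^ ('m::finite + 'm) ^ ('m + 'm)" where
  "symp_omega = (\<chi> i j. (case (i, j) of
       (Inl a, Inr b) \<Rightarrow> (if a = b then -1 else 0)
     | (Inr a, Inl b) \<Rightarrow> (if a = b then 1 else 0)
     | _ \<Rightarrow> 0))"

definition symp_form :: "real ^ ('m::finite + 'm) \<Rightarrow> real ^ ('m + 'm) \<Rightarrow> real" where
  "symp_form u v = u \<bullet> (symp_omega *v v)"

end

theory Submission
  imports Defs
begin

lemma sum_UNIV_sum: "sum (g :: ('a::finite + 'b::finite) \<Rightarrow> real) UNIV = (\<Sum>a\<in>UNIV. g (Inl a)) + (\<Sum>b\<in>UNIV. g (Inr b))"
  using sum.Plus[of "UNIV::'a set" "UNIV::'b set" g] by (simp add: comp_def)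

lemma if_ab: "(if P then a else b) * (x::real) = (if P then a * x else b * x)" by simp

lemma symp_form_eq: "symp_form u v = (\<Sum>a\<in>UNIV. u$Inr a * v$Inl a - u$Inl a * v$Inr a)"
proof -
  have row: "(symp_omega *v v) $ k = (case k of Inl a \<Rightarrow> - v$Inr a | Inr a \<Rightarrow> v$Inl a)" for k :: "'a + 'a"
    by (cases k) (simp_all add: matrix_vector_mult_def symp_omega_def sum_UNIV_sum if_ab sum.delta cong del: if_weak_cong)
  show ?thesis
    unfolding symp_form_def inner_vec_def
    by (simp add: sum_UNIV_sum row sum_subtractf sum_negf)
qed

definition restr :: "'m set \<Rightarrow> real ^ ('m::finite + 'm) \<Rightarrow> real ^ ('m + 'm)" where
  "restr S z = (\<chi> k. (case k of Inl a \<Rightarrow> if a \<in> S then z$k else 0 | Inr a \<Rightarrow> if a \<in> S then z$k else 0))"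

lemma restr_nth: "restr S z $ Inl a = (if a \<in> S then z $ Inl a else 0)"
  "restr S z $ Inr a = (if a \<in> S then z $ Inr a else 0)"
  by (simp_all add: restr_def)

lemma restr_UNIV: "restr UNIV z = z"
  by (simp add: vec_eq_iff restr_def split: sum.split)

lemma restr_insert: "restr (insert i S) z = restr S z + restr {i} z"
  if "i \<notin> S"
  using that by (auto simp: vec_eq_iff restr_def split: sum.split)

lemma restr_orth: "i \<notin> S \<Longrightarrow> symp_form (restr S z) (restr {i} z) = 0"
  unfolding symp_form_eq restr_nth by (intro sum.neutral) auto

lemma restr_empty: "restr {} z = 0"
  by (simp add: vec_eq_iff restr_def split: sum.split)

locale lamloc =
  fixes lam :: "real ^ ('m::finite + 'm) \<Rightarrow> real"
  assumes hom: "\<And>a z. lam (a *\<^sub>R z) = a * lam z"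
    and add: "\<And>z1 z2. symp_form z1 z2 = 0 \<Longrightarrow> lam (z1 + z2) = lam z1 + lam z2"
begin

lemma gen:
  assumes blk: "\<And>i. lam (restr {i} z) = restr {i} z \<bullet> c"
  shows "lam (restr S z) = restr S z \<bullet> c"
proof -
  have l0: "lam 0 = 0" using hom[of 0 0] by simp
  have "finite S" by simp
  then show ?thesis
  proof (induction S rule: finite_induct)
    case empty
    then show ?case by (simp add: restr_empty l0)
  next
    case (insert i S)
    have "lam (restr (insert i S) z) = lam (restr S z + restr {i} z)"
      by (simp only: restr_insert[OF insert(2)])
    also have "\<dots> = lam (restr S z) + lam (restr {i} z)"
      by (rule add) (rule restr_orth[OF insert(2)])
    also have "\<dots> = restr S z \<bullet> c + restr {i} z \<bullet> c"
      by (simp only: insert(3) blk)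
    also have "\<dots> = restr (insert i S) z \<bullet> c"
      by (simp only: restr_insert[OF insert(2)] inner_add_left)
    finally show ?case .
  qed
qed

lemma lag:
  assumes c_def: "c = (\<chi> k. lam (axis k 1))"
  shows "(\<forall>a. z $ Inr a = 0) \<Longrightarrow> lam z = z \<bullet> c"
    and "(\<forall>a. z $ Inl a = 0) \<Longrightarrow> lam z = z \<bullet> c"
proof -
  assume h: "\<forall>a. z $ Inr a = 0"
  have "lam (restr UNIV z) = restr UNIV z \<bullet> c"
  proof (rule gen)
    fix i
    have "restr {i} z = z $ Inl i *\<^sub>R axis (Inl i) 1"
      using h by (auto simp: vec_eq_iff restr_def axis_def split: sum.split)
    then show "lam (restr {i} z) = restr {i} z \<bullet> c"
      by (simp add: hom inner_axis' c_def)
  qed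
  then show "lam z = z \<bullet> c" by (simp add: restr_UNIV)
next
  assume h: "\<forall>a. z $ Inl a = 0"
  have "lam (restr UNIV z) = restr UNIV z \<bullet> c"
  proof (rule gen)
    fix i
    have "restr {i} z = z $ Inr i *\<^sub>R axis (Inr i) 1"
      using h by (auto simp: vec_eq_iff restr_def axis_def split: sum.split)
    then show "lam (restr {i} z) = restr {i} z \<bullet> c"
      by (simp add: hom inner_axis' c_def)
  qed
  then show "lam z = z \<bullet> c" by (simp add: restr_UNIV)
qed

lemma block:
  assumes c_def: "c = (\<chi> k. lam (axis k 1))"
    and ij: "(i::'m) \<noteq> j"
  shows "lam (x *\<^sub>R axis (Inl i) 1 + y *\<^sub>R axis (Inr i) 1) = (x *\<^sub>R axis (Inl i) 1 + y *\<^sub>R axis (Inr i) 1) \<bullet> c"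
proof -
  let ?eL = "\<lambda>a. axis (Inl a) (1::real) :: real ^ ('m + 'm)"
  let ?eR = "\<lambda>a. axis (Inr a) (1::real) :: real ^ ('m + 'm)"
  define z where "z = x *\<^sub>R ?eL i + y *\<^sub>R ?eR i"
  define z' where "z' = x *\<^sub>R ?eL j - y *\<^sub>R ?eR j"
  define A1 where "A1 = x *\<^sub>R ?eL i + x *\<^sub>R ?eL j"
  define B1 where "B1 = y *\<^sub>R ?eR i - y *\<^sub>R ?eR j"
  define A2 where "A2 = x *\<^sub>R ?eL i - x *\<^sub>R ?eL j"
  define B2 where "B2 = y *\<^sub>R ?eR i + y *\<^sub>R ?eR j"
  have zz: "symp_form z z' = 0" "symp_form z (- z') = 0"
    unfolding symp_form_eq z_def z'_def using ij
    by (auto intro!: sum.neutral simp: axis_def)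
  have s1: "symp_form A1 B1 = (\<Sum>a\<in>UNIV. (if a = j then x*y else 0) - (if a = i then x*y else 0))"
    unfolding symp_form_eq A1_def B1_def using ij
    by (intro sum.cong) (auto simp: axis_def)
  have s2: "symp_form A2 B2 = (\<Sum>a\<in>UNIV. (if a = j then x*y else 0) - (if a = i then x*y else 0))"
    unfolding symp_form_eq A2_def B2_def using ij
    by (intro sum.cong) (auto simp: axis_def)
  have s0: "(\<Sum>a\<in>UNIV. (if a = j then x*y else 0) - (if a = i then x*y else (0::real))) = 0"
    by (simp add: sum_subtractf)
  have "\<forall>a. A1 $ Inr a = 0" by (simp add: A1_def axis_def)
  then have lA1: "lam A1 = A1 \<bullet> c" by (rule lag(1)[OF c_def])
  have "\<forall>a. B1 $ Inl a = 0" by (simp add: B1_def axis_def)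
  then have lB1: "lam B1 = B1 \<bullet> c" by (rule lag(2)[OF c_def])
  have "\<forall>a. A2 $ Inr a = 0" by (simp add: A2_def axis_def)
  then have lA2: "lam A2 = A2 \<bullet> c" by (rule lag(1)[OF c_def])
  have "\<forall>a. B2 $ Inl a = 0" by (simp add: B2_def axis_def)
  then have lB2: "lam B2 = B2 \<bullet> c" by (rule lag(2)[OF c_def])
  have e1: "A1 + B1 = z + z'" unfolding A1_def B1_def z_def z'_def by (simp add: algebra_simps)
  have e2: "A2 + B2 = z + - z'" unfolding A2_def B2_def z_def z'_def by (simp add: algebra_simps)
  have neg: "lam (- z') = - lam z'" using hom[of "-1" z'] by simp
  have "lam z + lam z' = lam (A1 + B1)" using add[OF zz(1)] e1 by simp
  also have "\<dots> = A1 \<bullet> c + B1 \<bullet> c" using add[of A1 B1] s1 s0 lA1 lB1 by simp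
  also have "\<dots> = (z + z') \<bullet> c" by (simp only: e1[symmetric] inner_add_left)
  finally have p1: "lam z + lam z' = (z + z') \<bullet> c" .
  have "lam z + lam (- z') = lam (A2 + B2)" using add[OF zz(2)] e2 by simp
  also have "\<dots> = A2 \<bullet> c + B2 \<bullet> c" using add[of A2 B2] s2 s0 lA2 lB2 by simp
  also have "\<dots> = (z + - z') \<bullet> c" by (simp only: e2[symmetric] inner_add_left)
  finally have p2: "lam z - lam z' = (z + - z') \<bullet> c" using neg by simp
  have q: "(z + z') \<bullet> c = z \<bullet> c + z' \<bullet> c" "(z + - z') \<bullet> c = z \<bullet> c - z' \<bullet> c"
    by (simp_all add: inner_add_left inner_diff_left)
  have "lam z = z \<bullet> c" using p1 p2 q by linarith
  then show ?thesis unfolding z_def .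
qed

end

theorem lemma1:
  fixes lam :: "real ^ ('m::finite + 'm) \<Rightarrow> real"
  assumes "CARD('m) \<ge> 2"
    and "\<And>a z. lam (a *\<^sub>R z) = a * lam z"
    and "\<And>z1 z2. symp_form z1 z2 = 0 \<Longrightarrow> lam (z1 + z2) = lam z1 + lam z2"
  shows "linear lam"
proof -
  interpret lamloc lam using assms(2,3) by unfold_locales
  define c where "c = (\<chi> k. lam (axis k 1) :: real ^ ('m + 'm))"
  have other: "\<exists>j::'m. j \<noteq> i" for i :: 'm
  proof (rule ccontr)
    assume "\<not> (\<exists>j. j \<noteq> i)"
    then have "UNIV = {i}" by auto
    then have "CARD('m) = Suc 0" using card_1_singleton_iff by blast
    then show False using assms(1) by simp
  qed
  have all: "lam z = z \<bullet> c" for z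
  proof -
    have "lam (restr UNIV z) = restr UNIV z \<bullet> c"
    proof (rule gen)
      fix i :: 'm
      obtain j where ij: "j \<noteq> i" using other[of i] by blast
      have r: "restr {i} z = z $ Inl i *\<^sub>R axis (Inl i) 1 + z $ Inr i *\<^sub>R axis (Inr i) 1"
        by (auto simp: vec_eq_iff restr_def axis_def split: sum.split)
      show "lam (restr {i} z) = restr {i} z \<bullet> c"
        unfolding r using ij[symmetric] by (rule block[OF c_def])
    qed
    then show ?thesis by (simp add: restr_UNIV)
  qed
  have "lam = (\<lambda>z. z \<bullet> c)" using all by auto
  then show ?thesis using bounded_linear_inner_left[of c] bounded_linear.linear by auto
qed
end
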